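(* Let $G$ be a multigraph of even order $n$, let $S \subseteq V(G)$ with $|S|$ odd and $|S| \ge 3$, let $F$ be a 1-factor of $G$, and let $\Delta = \Delta(G)$. Then $$\operatorname{ex}(\langle S\rangle, \Delta-1; G-F) \le \operatorname{ex}(\langle S\rangle, \Delta; G) + \min\{(n-|S|-1)/2,\ (|S|-1)/2\}.$$
   Context: Multigraphs are finite and loopless, multiple edges allowed. For a host multigraph $K$ and $S\subseteq V(K)$ of odd size at least 3, $\langle S\rangle$ denotes the subgraph of $K$ induced by $S$, and $\operatorname{ex}(\langle S\rangle, k; K) = e(\langle S\rangle) - k(|S|-1)/2$ is its $k$-excess computed in $K$ (here $e(\cdot)$ is the number of edges). *)

theory Defs
  imports Complex_Main
begin

text \<open>Parallel edges are distinct identifiers with the same endpoints.\<close>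

definition multigraph :: "'a set \<Rightarrow> 'e set \<Rightarrow> ('e \<Rightarrow> 'a set) \<Rightarrow> bool" where
  "multigraph V E ends \<longleftrightarrow> finite V \<and> finite E \<and>
     (\<forall>e\<in>E. ends e \<subseteq> V \<and> card (ends e) = 2)"

definition deg :: "'e set \<Rightarrow> ('e \<Rightarrow> 'a set) \<Rightarrow> 'a \<Rightarrow> nat" where
  "deg E ends v = card {e\<in>E. v \<in> ends e}"

definition max_deg :: "'a set \<Rightarrow> 'e set \<Rightarrow> ('e \<Rightarrow> 'a set) \<Rightarrow> nat" where
  "max_deg V E ends = Max (deg E ends ` V)"

definition one_factor :: "'a set \<Rightarrow> 'e set \<Rightarrow> ('e \<Rightarrow> 'a set) \<Rightarrow> 'e set \<Rightarrow> bool" where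
  "one_factor V E ends F \<longleftrightarrow> F \<subseteq> E \<and> (\<forall>v\<in>V. deg F ends v = 1)"

definition induced_edges :: "'e set \<Rightarrow> ('e \<Rightarrow> 'a set) \<Rightarrow> 'a set \<Rightarrow> nat" where
  "induced_edges E ends S = card {e\<in>E. ends e \<subseteq> S}"

definition excess :: "'e set \<Rightarrow> ('e \<Rightarrow> 'a set) \<Rightarrow> 'a set \<Rightarrow> real \<Rightarrow> real" where
  "excess E ends S k = real (induced_edges E ends S) - k * (real (card S) - 1) / 2"

end

theory Submission
  imports Defs
begin

lemma dc:
  assumes "finite T" "finite F"
  shows "(\<Sum>v\<in>T. card {e\<in>F. v \<in> ends e}) = (\<Sum>e\<in>F. card (ends e \<inter> T))"
proof -
  have "(\<Sum>v\<in>T. card {e\<in>F. v \<in> ends e}) = (\<Sum>v\<in>T. \<Sum>e\<in>F. if v \<in> ends e then 1 else (0::nat))"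
    using assms by (simp add: sum.If_cases Int_def conj_commute)
  also have "\<dots> = (\<Sum>e\<in>F. \<Sum>v\<in>T. if v \<in> ends e then 1 else (0::nat))"
    by (rule sum.swap)
  also have "\<dots> = (\<Sum>e\<in>F. card (ends e \<inter> T))"
    using assms by (simp add: sum.If_cases Int_commute)
  finally show ?thesis .
qed

theorem mainTheorem4:
  fixes V :: "'a set" and E F :: "'e set" and ends :: "'e \<Rightarrow> 'a set" and S :: "'a set"
  assumes "multigraph V E ends"
    and "even (card V)"
    and "S \<subseteq> V" and "odd (card S)" and "card S \<ge> 3"
    and "one_factor V E ends F"
  shows "excess (E - F) ends S (real (max_deg V E ends) - 1)
     \<le> excess E ends S (real (max_deg V E ends))
        + min ((real (card V) - real (card S) - 1) / 2) ((real (card S) - 1) / 2)"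
proof -
  have fV: "finite V" and fE: "finite E" and ed: "\<forall>e\<in>E. ends e \<subseteq> V \<and> card (ends e) = 2"
    using assms(1) unfolding multigraph_def by auto
  have FE: "F \<subseteq> E" and d1: "\<forall>v\<in>V. deg F ends v = 1" using assms(6) unfolding one_factor_def by auto
  have fF: "finite F" using FE fE finite_subset by blast
  have fS: "finite S" using assms(3) fV finite_subset by blast
  define Fi where "Fi = {e\<in>F. ends e \<subseteq> S}"
  have fFi: "finite Fi" using fF Fi_def by simp
  have split: "{e\<in>E. ends e \<subseteq> S} = {e\<in>E - F. ends e \<subseteq> S} \<union> Fi"
    using FE Fi_def by auto
  have "card {e\<in>E. ends e \<subseteq> S} = card {e\<in>E - F. ends e \<subseteq> S} + card Fi"
    unfolding split by (rule card_Un_disjoint) (use fE fFi Fi_def in auto)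
  hence ie: "real (induced_edges E ends S) = real (induced_edges (E - F) ends S) + real (card Fi)"
    unfolding induced_edges_def by simp
  have sS: "(\<Sum>e\<in>F. card (ends e \<inter> S)) = card S"
  proof -
    have "(\<Sum>v\<in>S. card {e\<in>F. v \<in> ends e}) = (\<Sum>v\<in>S. 1)"
      using d1 assms(3) by (intro sum.cong) (auto simp: deg_def)
    thus ?thesis using dc[OF fS fF, of ends] by simp
  qed
  have sVS: "(\<Sum>e\<in>F. card (ends e \<inter> (V - S))) = card V - card S"
  proof -
    have fVS: "finite (V - S)" using fV by simp
    have "(\<Sum>v\<in>V - S. card {e\<in>F. v \<in> ends e}) = (\<Sum>v\<in>V - S. 1)"
      using d1 by (intro sum.cong) (auto simp: deg_def)
    thus ?thesis using dc[OF fVS fF, of ends] assms(3) fS by (simp add: card_Diff_subset)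
  qed
  have pt: "card (ends e \<inter> S) \<le> 2 * (if ends e \<subseteq> S then 1 else 0) + card (ends e \<inter> (V - S))"
    if "e \<in> F" for e
  proof (cases "ends e \<subseteq> S")
    case True
    then show ?thesis using ed FE that by (force simp: Int_absorb2)
  next
    case False
    have fe: "finite (ends e)" using ed FE that fV finite_subset by blast
    have c2: "card (ends e) = 2" using ed FE that by auto
    obtain x where x: "x \<in> ends e" "x \<notin> S" using False by auto
    have xV: "x \<in> V" using ed FE that x by auto
    have "card (ends e \<inter> S) < card (ends e)"
      by (rule psubset_card_mono) (use fe x in auto)
    moreover have "card (ends e \<inter> (V - S)) \<ge> 1"
      using x xV fe by (metis Diff_iff IntI card_0_eq empty_iff finite_Int less_one not_le)
    ultimately show ?thesis using False c2 by simp
  qed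
  have "card S \<le> (\<Sum>e\<in>F. 2 * (if ends e \<subseteq> S then 1 else 0) + card (ends e \<inter> (V - S)))"
    unfolding sS[symmetric] by (rule sum_mono) (rule pt)
  also have "\<dots> = 2 * card Fi + (card V - card S)"
  proof -
    have "(\<Sum>e\<in>F. 2 * (if ends e \<subseteq> S then 1 else 0) + card (ends e \<inter> (V - S)))
        = (\<Sum>e\<in>F. 2 * (if ends e \<subseteq> S then 1 else 0)) + (\<Sum>e\<in>F. card (ends e \<inter> (V - S)))"
      by (rule sum.distrib)
    also have "(\<Sum>e\<in>F. 2 * (if ends e \<subseteq> S then 1 else (0::nat))) = 2 * card Fi"
      using fF by (simp add: sum_distrib_left[symmetric] sum.If_cases Fi_def Int_def conj_commute)
    finally show ?thesis using sVS by simp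
  qed
  finally have key: "card S \<le> 2 * card Fi + (card V - card S)" .
  have cSV: "card S \<le> card V" using card_mono[OF fV assms(3)] .
  have key': "real (card S) \<le> 2 * real (card Fi) + real (card V) - real (card S)"
    using key cSV by linarith
  show ?thesis
    unfolding excess_def ie using key'
    by (simp add: field_simps min_def)
qed

end
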